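(* Let $n,m,k$ be positive integers with $k\mid n$, let $p\in(0,1/2)$, and let $\mu_1,\dots,\mu_k\in\{0,1\}^m$ be fixed. Let $V=V_1\sqcup\dots\sqcup V_k$ with $|V_i|=n/k$, where every person $v\in V_i$ answers question $s\in\{1,\dots,m\}$ with $v(s)=\mu_i(s)$ with probability $1-p$ and $v(s)=1-\mu_i(s)$ with probability $p$, independently across persons and questions. Let $\mathcal P$ be the set of cuts $\{A_s^0,A_s^1\}$, $s=1,\dots,m$, with $A_s^y=\{v\in V: v(s)=y\}$. Let $a\in\mathbb N$ be the agreement parameter and $\alpha=a/n$. If $p<(n-ka)/(3n)$, then the probability that some mindset $\mu_i$ does not induce a $\mathcal P$-tangle is at most $$k\,m\,\exp\Bigl(-\frac{2n}{9k}(1-k\alpha-3p)^2\Bigr).$$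
   Context: An orientation of $\mathcal P$ chooses one side of every cut; it is identified with $\tau\in\{0,1\}^m$ by choosing the side $A_s^{\tau(s)}$ for question $s$. An orientation $O$ is a $\mathcal P$-tangle if for all (not necessarily distinct) chosen sides $A,B,C\in O$ we have $|A\cap B\cap C|\ge a$. The mindset $\mu_i$ induces a tangle if the orientation corresponding to $\mu_i$ is a $\mathcal P$-tangle. The probability is over the random answers. *)

theory Defs
  imports "HOL-Probability.Probability"
begin

text \<open>Persons are 0..<n, questions are 0..<m, groups (mindsets) are 0..<k.
  Answers are booleans (True = 1, False = 0); an answer profile is a function
  ans :: (person, question) \<Rightarrow> bool.\<close>

definition group_of :: "nat \<Rightarrow> nat \<Rightarrow> nat \<Rightarrow> nat" where
  "group_of n k v = v div (n div k)"

definition answer_pmf :: "nat \<Rightarrow> nat \<Rightarrow> nat \<Rightarrow> real \<Rightarrow> (nat \<Rightarrow> nat \<Rightarrow> bool)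
    \<Rightarrow> (nat \<times> nat \<Rightarrow> bool) pmf" where
  "answer_pmf n m k p mu =
     Pi_pmf ({..<n} \<times> {..<m}) False
       (\<lambda>(v, s). bernoulli_pmf (if mu (group_of n k v) s then 1 - p else p))"

definition side :: "nat \<Rightarrow> (nat \<times> nat \<Rightarrow> bool) \<Rightarrow> nat \<Rightarrow> bool \<Rightarrow> nat set" where
  "side n ans s y = {v \<in> {..<n}. ans (v, s) = y}"

definition is_tangle :: "nat \<Rightarrow> nat \<Rightarrow> nat \<Rightarrow> (nat \<times> nat \<Rightarrow> bool) \<Rightarrow> (nat \<Rightarrow> bool) \<Rightarrow> bool" where
  "is_tangle n m a ans tau \<longleftrightarrow>
     (\<forall>s1<m. \<forall>s2<m. \<forall>s3<m.
        card (side n ans s1 (tau s1) \<inter> side n ans s2 (tau s2) \<inter> side n ans s3 (tau s3)) \<ge> a)"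

end

theory Submission
  imports Defs
begin

lemma bern_flip:
  assumes "0 \<le> p" "p \<le> 1"
  shows "map_pmf (\<lambda>b. b \<noteq> c) (bernoulli_pmf (if c then 1 - p else p)) = bernoulli_pmf p"
proof (cases c)
  case True
  have f: "(\<lambda>b. b \<noteq> c) = Not" using True by (intro ext) simp
  have inj: "inj Not" by (rule injI) simp
  have "map_pmf Not (bernoulli_pmf (1 - p)) = bernoulli_pmf p"
  proof (rule pmf_eqI)
    fix b
    have "pmf (map_pmf Not (bernoulli_pmf (1 - p))) (\<not> (\<not> b)) = pmf (bernoulli_pmf (1 - p)) (\<not> b)"
      by (rule pmf_map_inj'[OF inj])
    then show "pmf (map_pmf Not (bernoulli_pmf (1 - p))) b = pmf (bernoulli_pmf p) b"
      using assms by (cases b) simp_all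
  qed
  then show ?thesis using True f by simp
next
  case False
  have f: "(\<lambda>b. b \<noteq> c) = id" using False by (intro ext) simp
  show ?thesis using False unfolding f by (simp add: pmf.map_id)
qed

lemma dist_bad:
  assumes "k dvd n" "0 < k" "i < k" "s < m" "0 \<le> p" "p \<le> 1"
  shows "map_pmf (\<lambda>ans. card {v\<in>{i*(n div k)..<Suc i*(n div k)}. ans (v,s) \<noteq> mu i s}) (answer_pmf n m k p mu)
         = binomial_pmf (n div k) p"
proof -
  define N where "N = n div k"
  define V where "V = {i*N..<Suc i*N}"
  define B where "B = V \<times> {s}"
  define c where "c = mu i s"
  define g where "g = (\<lambda>(v, s). bernoulli_pmf (if mu (group_of n k v) s then 1 - p else p))"
  have nN: "n = k * N" using assms unfolding N_def by simp
  have "Suc i * N \<le> k * N" using assms(3) by (intro mult_le_mono1) simp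
  then have VN: "V \<subseteq> {..<n}" unfolding V_def nN by auto
  have BA: "B \<subseteq> {..<n} \<times> {..<m}" using VN assms unfolding B_def by auto
  have grp: "group_of n k v = i" if "v \<in> V" for v
    using that unfolding V_def group_of_def N_def[symmetric]
    by (intro div_nat_eqI) (auto simp: mult.commute)
  have gB: "g x = bernoulli_pmf (if c then 1 - p else p)" if "x \<in> B" for x
    using that grp unfolding g_def B_def c_def by auto
  have "binomial_pmf N p = map_pmf (\<lambda>f. card {x\<in>B. f x}) (Pi_pmf B c (\<lambda>_. bernoulli_pmf p))"
    by (rule binomial_pmf_altdef') (use assms in \<open>auto simp: B_def V_def\<close>)
  also have "Pi_pmf B c (\<lambda>_. bernoulli_pmf p) = Pi_pmf B c (\<lambda>x. map_pmf (\<lambda>b. b \<noteq> c) (g x))"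
    by (intro Pi_pmf_cong refl) (metis gB bern_flip assms(5) assms(6))
  also have "\<dots> = map_pmf (\<lambda>h. (\<lambda>b. b \<noteq> c) \<circ> h) (Pi_pmf B False g)"
    by (rule Pi_pmf_map) (auto simp: B_def V_def)
  also have "Pi_pmf B False g = map_pmf (\<lambda>f x. if x \<in> B then f x else False) (answer_pmf n m k p mu)"
    unfolding answer_pmf_def g_def by (rule Pi_pmf_subset) (use BA in auto)
  finally have "binomial_pmf N p = map_pmf (\<lambda>ans. card {x\<in>B. (if x \<in> B then ans x else False) \<noteq> c}) (answer_pmf n m k p mu)"
    by (simp add: pmf.map_comp o_def)
  also have "(\<lambda>ans. card {x\<in>B. (if x \<in> B then ans x else False) \<noteq> c}) = (\<lambda>ans. card {x\<in>B. ans x \<noteq> c})"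
    by (intro ext arg_cong[where f=card]) auto
  also have "(\<lambda>ans. card {x\<in>B. ans x \<noteq> c}) = (\<lambda>ans. card {v\<in>V. ans (v,s) \<noteq> c})"
  proof
    fix ans :: "nat \<times> nat \<Rightarrow> bool"
    have "{x\<in>B. ans x \<noteq> c} = (\<lambda>v. (v,s)) ` {v\<in>V. ans (v,s) \<noteq> c}" unfolding B_def by auto
    then show "card {x\<in>B. ans x \<noteq> c} = card {v\<in>V. ans (v,s) \<noteq> c}"
      by (simp add: card_image inj_on_def)
  qed
  finally show ?thesis unfolding V_def N_def c_def by simp
qed

lemma tangle_of_good:
  assumes "k dvd n" "0 < k" "i < k"
    and good: "\<And>s. s < m \<Longrightarrow> 3 * card {v\<in>{i*(n div k)..<Suc i*(n div k)}. ans (v,s) \<noteq> mu i s} < n div k - a"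
  shows "is_tangle n m a ans (mu i)"
  unfolding is_tangle_def
proof (intro allI impI)
  fix s1 s2 s3 assume s: "s1 < m" "s2 < m" "s3 < m"
  define N where "N = n div k"
  define V where "V = {i*N..<Suc i*N}"
  define bad where "bad = (\<lambda>s. {v\<in>V. ans (v,s) \<noteq> mu i s})"
  have nN: "n = k * N" using assms unfolding N_def by simp
  have "Suc i * N \<le> k * N" using assms(3) by (intro mult_le_mono1) simp
  then have VN: "V \<subseteq> {..<n}" unfolding V_def nN by auto
  have cV: "card V = N" unfolding V_def by simp
  have b: "3 * card (bad s) < N - a" if "s < m" for s
    using good[OF that] unfolding bad_def V_def N_def .
  have fb: "finite (bad s)" for s unfolding bad_def V_def by simp
  have sub: "V - (bad s1 \<union> bad s2 \<union> bad s3) \<subseteq>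
     side n ans s1 (mu i s1) \<inter> side n ans s2 (mu i s2) \<inter> side n ans s3 (mu i s3)"
    using VN unfolding bad_def side_def by auto
  have "card (bad s1 \<union> bad s2 \<union> bad s3) \<le> card (bad s1) + card (bad s2) + card (bad s3)"
    using card_Un_le[of "bad s1 \<union> bad s2" "bad s3"] card_Un_le[of "bad s1" "bad s2"] by linarith
  also have "\<dots> < N - a" using b[OF s(1)] b[OF s(2)] b[OF s(3)] by linarith
  finally have u: "card (bad s1 \<union> bad s2 \<union> bad s3) < N - a" .
  have "card V - card (bad s1 \<union> bad s2 \<union> bad s3) \<le> card (V - (bad s1 \<union> bad s2 \<union> bad s3))"
    by (rule diff_card_le_card_Diff) (simp add: fb)
  also have "\<dots> \<le> card (side n ans s1 (mu i s1) \<inter> side n ans s2 (mu i s2) \<inter> side n ans s3 (mu i s3))"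
    by (rule card_mono[OF _ sub]) (simp add: side_def)
  finally show "a \<le> card (side n ans s1 (mu i s1) \<inter> side n ans s2 (mu i s2) \<inter> side n ans s3 (mu i s3))"
    using u cV by linarith
qed

theorem lemma1:
  fixes n m k a :: nat and p :: real and mu :: "nat \<Rightarrow> nat \<Rightarrow> bool"
  assumes "n > 0" "m > 0" "k > 0" "k dvd n"
    and "0 < p" "p < 1/2"
    and "p < (real n - real k * real a) / (3 * real n)"
  shows "measure_pmf.prob (answer_pmf n m k p mu)
           {ans. \<exists>i<k. \<not> is_tangle n m a ans (mu i)}
         \<le> real k * real m *
           exp (- (2 * real n / (9 * real k)) * (1 - real k * (real a / real n) - 3 * p)^2)"
proof -
  define N where "N = n div k"
  define P where "P = answer_pmf n m k p mu"
  define \<epsilon> where "\<epsilon> = (real N - real a) / 3 - real N * p"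
  define bad where "bad = (\<lambda>i s ans. card {v\<in>{i*(n div k)..<Suc i*(n div k)}. ans (v,s) \<noteq> mu i s})"
  define E where "E = (\<lambda>(i,s). {ans. real (bad i s ans) \<ge> real N * p + \<epsilon>})"
  have nN: "n = k * N" using assms unfolding N_def by simp
  have Npos: "N > 0" using assms nN by (metis gr0I mult_0_right)
  have rN: "real N = real n / real k" using nN assms by simp
  have "3 * p * real n < real n - real k * real a"
    using assms(7) assms(1) by (simp add: field_simps)
  then have "3 * p * (real k * real N) < real k * real N - real k * real a"
    using nN by simp
  then have "real k * (3 * p * real N) < real k * (real N - real a)"
    by (simp add: algebra_simps)
  then have key: "3 * p * real N < real N - real a"
    using assms(3) by simp
  then have eps: "\<epsilon> \<ge> 0" unfolding \<epsilon>_def by (simp add: algebra_simps)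
  have sub: "{ans. \<exists>i<k. \<not> is_tangle n m a ans (mu i)} \<subseteq> (\<Union>x\<in>{..<k}\<times>{..<m}. E x)"
  proof
    fix ans assume "ans \<in> {ans. \<exists>i<k. \<not> is_tangle n m a ans (mu i)}"
    then obtain i where i: "i < k" "\<not> is_tangle n m a ans (mu i)" by auto
    have "\<exists>s<m. \<not> 3 * bad i s ans < N - a"
    proof (rule ccontr)
      assume "\<not> ?thesis"
      then have "is_tangle n m a ans (mu i)"
        by (intro tangle_of_good[OF assms(4) assms(3) i(1)]) (auto simp: bad_def N_def)
      with i show False by simp
    qed
    then obtain s where s: "s < m" "\<not> 3 * bad i s ans < N - a" by auto
    have "0 \<le> 3 * p * real N" using assms(5) by simp
    then have "real a < real N" using key by linarith
    then have "a < N" by simp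
    then have ra: "real (N - a) = real N - real a" by simp
    have "N - a \<le> 3 * bad i s ans" using s(2) by simp
    then have "real (N - a) \<le> real (3 * bad i s ans)" by (simp only: of_nat_le_iff)
    then have h: "real N - real a \<le> 3 * real (bad i s ans)" unfolding ra by simp
    have "(real N - real a) / 3 \<le> (3 * real (bad i s ans)) / 3"
      by (rule divide_right_mono[OF h]) simp
    then have h2: "(real N - real a) / 3 \<le> real (bad i s ans)" by simp
    have eq: "real N * p + \<epsilon> = (real N - real a) / 3" unfolding \<epsilon>_def by simp
    have "real N * p + \<epsilon> \<le> real (bad i s ans)" unfolding eq by (rule h2)
    then show "ans \<in> (\<Union>x\<in>{..<k}\<times>{..<m}. E x)" using i s unfolding E_def by auto
  qed
  have each: "measure_pmf.prob P (E x) \<le> exp (-2 * \<epsilon>\<^sup>2 / real N)" if xI: "x \<in> {..<k}\<times>{..<m}" for x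
  proof -
    obtain i s where x: "x = (i,s)" "i < k" "s < m" using xI by auto
    have "measure_pmf.prob P (E x) = measure_pmf.prob (map_pmf (bad i s) P) {x. real x \<ge> real N * p + \<epsilon>}"
      unfolding E_def x by (simp add: vimage_def)
    also have "map_pmf (bad i s) P = binomial_pmf N p"
      unfolding bad_def P_def N_def by (rule dist_bad) (use assms x in auto)
    also have "measure_pmf.prob (binomial_pmf N p) {x. real x \<ge> real N * p + \<epsilon>} \<le> exp (-2 * \<epsilon>\<^sup>2 / real N)"
      by (rule binomial_distribution.prob_ge) (use assms Npos eps in \<open>auto simp: binomial_distribution_def\<close>)
    finally show ?thesis .
  qed
  have "measure_pmf.prob P {ans. \<exists>i<k. \<not> is_tangle n m a ans (mu i)} \<le> measure_pmf.prob P (\<Union>x\<in>{..<k}\<times>{..<m}. E x)"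
    by (rule measure_pmf.finite_measure_mono[OF sub]) simp
  also have "\<dots> \<le> (\<Sum>x\<in>{..<k}\<times>{..<m}. measure_pmf.prob P (E x))"
    by (rule measure_pmf.finite_measure_subadditive_finite) auto
  also have "\<dots> \<le> (\<Sum>x\<in>{..<k}\<times>{..<m}. exp (-2 * \<epsilon>\<^sup>2 / real N))"
    by (rule sum_mono) (rule each)
  also have "\<dots> = real k * real m * exp (-2 * \<epsilon>\<^sup>2 / real N)" by simp
  also have "-2 * \<epsilon>\<^sup>2 / real N = - (2 * real n / (9 * real k)) * (1 - real k * (real a / real n) - 3 * p)^2"
  proof -
    have rpos: "real N > 0" using Npos by simp
    have c1: "real k * (real a / real n) = real a / real N"
      unfolding rN using assms(1,3) by simp
    have c2: "1 - real a / real N - 3 * p = 3 * \<epsilon> / real N"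
      unfolding \<epsilon>_def using rpos by (simp add: field_simps)
    have c3: "2 * real n / (9 * real k) = 2 * real N / 9"
      unfolding rN by simp
    have c4: "-2 * \<epsilon>\<^sup>2 / real N = - (2 * real N / 9) * (3 * \<epsilon> / real N)^2"
      using rpos by (simp add: power2_eq_square)
    show ?thesis unfolding c1 c2 c3 c4 ..
  qed
  finally show ?thesis unfolding P_def .
qed

end
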